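(* Let $A=\{a_1,\dots,a_n\}$ and $L\subseteq a_1^*\cdots a_n^*$. Let $T=\{(a_1^{k_1}\cdots a_n^{k_n},\ a_1^{2k_1}\cdots a_n^{2k_n})\mid k_1,\dots,k_n\ge0\}$, $T(\downarrow L)=\{w\mid \exists v\in\downarrow L,\ (v,w)\in T\}$, and $K=\{a_1^{2k_1+1}\cdots a_n^{2k_n+1}\mid k_1,\dots,k_n\ge0\}$. Then $T(\downarrow L)$ and $K$ are not separable by a piecewise testable language if and only if $\downarrow L=a_1^*\cdots a_n^*$.
   Context: $\downarrow L$ denotes the set of all subsequences of words of $L$. A piecewise testable language is a finite Boolean combination of languages $A^*c_1A^*\cdots A^*c_kA^*$; two languages are separable by PTL if some piecewise testable $S$ contains the first and is disjoint from the second. *)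

theory Defs
  imports Main "HOL-Library.Sublist"
begin

text \<open>Words are lists; the alphabet is given as a list of distinct letters as = [a_1,...,a_n].
  Subsequence order: subseq u v (HOL-Library.Sublist) means u is a (scattered) subsequence of v.\<close>

definition down :: "'a list set \<Rightarrow> 'a list set" where
  "down L = {u. \<exists>v\<in>L. subseq u v}"

definition blocks :: "'a list \<Rightarrow> nat list \<Rightarrow> 'a list" where
  "blocks as ks = concat (map2 (\<lambda>a k. replicate k a) as ks)"

definition blockLang :: "'a list \<Rightarrow> 'a list set" where
  "blockLang as = {blocks as ks | ks. length ks = length as}"

definition relT :: "'a list \<Rightarrow> ('a list \<times> 'a list) set" where
  "relT as = {(blocks as ks, blocks as (map (\<lambda>k. 2 * k) ks)) | ks. length ks = length as}"

definition applyRel :: "('a list \<times> 'a list) set \<Rightarrow> 'a list set \<Rightarrow> 'a list set" where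
  "applyRel T L = {w. \<exists>v\<in>L. (v, w) \<in> T}"

definition langK :: "'a list \<Rightarrow> 'a list set" where
  "langK as = {blocks as (map (\<lambda>k. 2 * k + 1) ks) | ks. length ks = length as}"

inductive_set ptl :: "'a set \<Rightarrow> 'a list set set" for A :: "'a set" where
  gen: "set cs \<subseteq> A \<Longrightarrow> {u \<in> lists A. subseq cs u} \<in> ptl A"
| compl: "S \<in> ptl A \<Longrightarrow> lists A - S \<in> ptl A"
| union: "S \<in> ptl A \<Longrightarrow> R \<in> ptl A \<Longrightarrow> S \<union> R \<in> ptl A"
| inter: "S \<in> ptl A \<Longrightarrow> R \<in> ptl A \<Longrightarrow> S \<inter> R \<in> ptl A"

definition ptl_separable :: "'a set \<Rightarrow> 'a list set \<Rightarrow> 'a list set \<Rightarrow> bool" where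
  "ptl_separable A L1 L2 \<longleftrightarrow> (\<exists>S \<in> ptl A. L1 \<subseteq> S \<and> S \<inter> L2 = {})"

end

theory Submission
  imports Defs
begin

lemma blocks_Nil[simp]: "blocks [] ks = []" "blocks as [] = []"
  by (auto simp: blocks_def)

lemma blocks_Cons[simp]: "blocks (a#as) (k#ks) = replicate k a @ blocks as ks"
  by (simp add: blocks_def)

lemma rep_subseq: "subseq xs (replicate k a) \<longleftrightarrow> xs = replicate (length xs) a \<and> length xs \<le> k"
proof
  assume h: "subseq xs (replicate k a)"
  have "y = a" if "y \<in> set xs" for y
  proof -
    have "y \<in> set (replicate k a)" by (rule list_emb_set[OF h that]) simp
    thus ?thesis by (simp split: if_splits)
  qed
  hence "replicate (length xs) a = xs"
    by (intro replicate_length_same) blast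
  moreover have "length xs \<le> k" using list_emb_length[OF h] by simp
  ultimately show "xs = replicate (length xs) a \<and> length xs \<le> k" by simp
next
  assume h: "xs = replicate (length xs) a \<and> length xs \<le> k"
  define n where "n = length xs"
  have xs: "xs = replicate n a" "n \<le> k" using h n_def by auto
  have "replicate k a = replicate (k - n) a @ replicate n a"
    using xs replicate_add[of "k - n" n a] by simp
  moreover have "subseq (replicate n a) (replicate (k - n) a @ replicate n a)"
    by (rule subseq_drop_many) simp
  ultimately show "subseq xs (replicate k a)" using xs(1) by simp
qed

lemma filter_eq_rep: "filter ((=) a) u = replicate (count_list u a) a"
  by (induct u) auto

lemma rep_subseq_count: "subseq (replicate e a) u \<longleftrightarrow> e \<le> count_list u a"
proof
  assume "subseq (replicate e a) u"
  hence "subseq (filter ((=) a) (replicate e a)) (filter ((=) a) u)" by (rule subseq_filter)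
  hence "length (filter ((=) a) (replicate e a)) \<le> length (filter ((=) a) u)"
    by (rule list_emb_length)
  thus "e \<le> count_list u a" by (simp add: count_list_eq_length_filter)
next
  assume "e \<le> count_list u a"
  hence "subseq (replicate e a) (filter ((=) a) u)" by (simp add: filter_eq_rep rep_subseq)
  thus "subseq (replicate e a) u" using subseq_filter_left subseq_order.order_trans by blast
qed

lemma blocks_set: "set (blocks as ks) \<subseteq> set as"
proof (induct as arbitrary: ks)
  case Nil thus ?case by simp
next
  case (Cons a as)
  show ?case
  proof (cases ks)
    case Nil thus ?thesis by simp
  next
    case (Cons k ks')
    have "set (blocks as ks') \<subseteq> set as" by (rule Cons.hyps)
    thus ?thesis using Cons by auto
  qed
qed

lemma blocks_lists: "blocks as ks \<in> lists (set as)"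
  using blocks_set[of as ks] by (auto simp: in_lists_conv_set)

lemma blocks_decomp:
  "length ks = length as \<Longrightarrow> subseq w (blocks as ks) \<Longrightarrow>
   \<exists>js. length js = length as \<and> (\<forall>i<length as. js!i \<le> ks!i) \<and> w = blocks as js"
proof (induct as arbitrary: ks w)
  case Nil thus ?case by auto
next
  case (Cons a as)
  then obtain k ks' where ks: "ks = k # ks'" by (cases ks) auto
  from Cons.prems ks obtain w1 w2 where w: "w = w1 @ w2" "subseq w1 (replicate k a)"
    "subseq w2 (blocks as ks')" by (auto elim: subseq_appendE)
  from Cons.hyps[of ks' w2] Cons.prems ks w obtain js where
    js: "length js = length as" "\<forall>i<length as. js!i \<le> ks'!i" "w2 = blocks as js" by auto
  from w(2) have "w1 = replicate (length w1) a" "length w1 \<le> k" by (auto simp: rep_subseq)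
  thus ?case using js w ks
    by (intro exI[of _ "length w1 # js"]) (auto simp: less_Suc_eq_0_disj)
qed

lemma blocks_mono:
  "length js = length as \<Longrightarrow> length ks = length as \<Longrightarrow> \<forall>i<length as. js!i \<le> ks!i \<Longrightarrow>
   subseq (blocks as js) (blocks as ks)"
proof (induct as arbitrary: js ks)
  case Nil thus ?case by auto
next
  case (Cons a as)
  then obtain j js' k ks' where "js = j # js'" "ks = k # ks'" by (cases js; cases ks) auto
  note jk = this
  have h1: "j \<le> k" using Cons.prems jk by auto
  have h2: "\<forall>i<length as. js'!i \<le> ks'!i" using Cons.prems(3) jk by auto
  have "subseq (blocks as js') (blocks as ks')" using Cons.hyps Cons.prems jk h2 by simp
  moreover have "subseq (replicate j a) (replicate k a)" using h1 by (simp add: rep_subseq)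
  ultimately show ?case using jk by (simp add: list_emb_append_mono)
qed

lemma count_rep: "count_list (replicate k a) x = (if a = x then k else 0)"
  by (induct k) auto

lemma blocks_count:
  "distinct as \<Longrightarrow> length ks = length as \<Longrightarrow> i < length as \<Longrightarrow>
   count_list (blocks as ks) (as!i) = ks!i"
proof (induct as arbitrary: ks i)
  case Nil thus ?case by auto
next
  case (Cons a as)
  then obtain k ks' where ks: "ks = k # ks'" by (cases ks) auto
  show ?case
  proof (cases i)
    case 0
    have "a \<notin> set (blocks as ks')" using blocks_set Cons.prems by fastforce
    thus ?thesis using 0 ks by (simp add: count_rep)
  next
    case (Suc i')
    have "a \<noteq> as ! i'" using Cons.prems Suc by auto
    thus ?thesis using Suc ks Cons by (auto simp: count_rep)
  qed
qed

lemma ptl_lists: "lists A \<in> ptl A"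
proof -
  have "{u \<in> lists A. subseq [] u} \<in> ptl A" by (rule ptl.gen) simp
  thus ?thesis by simp
qed

lemma ptl_empty: "{} \<in> ptl A"
  using ptl.compl[OF ptl_lists] by simp

lemma ptl_gen': "c \<in> lists A \<Longrightarrow> {u \<in> lists A. subseq c u} \<in> ptl A"
  by (rule ptl.gen) auto

lemma sat_closure:
  "\<forall>u v. u \<in> lists A \<longrightarrow> v \<in> lists A \<longrightarrow> (\<forall>c\<in>C. subseq c u \<longleftrightarrow> subseq c v) \<longrightarrow>
     u \<in> {u \<in> lists A. \<exists>w\<in>Y. \<forall>d\<in>C. subseq d u \<longleftrightarrow> subseq d w} \<longrightarrow>
     v \<in> {u \<in> lists A. \<exists>w\<in>Y. \<forall>d\<in>C. subseq d u \<longleftrightarrow> subseq d w}"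
proof (intro allI impI)
  fix u v assume uv: "u \<in> lists A" "v \<in> lists A" and pr: "\<forall>c\<in>C. subseq c u \<longleftrightarrow> subseq c v"
    and "u \<in> {u \<in> lists A. \<exists>w\<in>Y. \<forall>d\<in>C. subseq d u \<longleftrightarrow> subseq d w}"
  then obtain w where w: "w \<in> Y" "\<forall>d\<in>C. subseq d u \<longleftrightarrow> subseq d w" by auto
  have "\<forall>d\<in>C. subseq d v \<longleftrightarrow> subseq d w" using w(2) pr by auto
  thus "v \<in> {u \<in> lists A. \<exists>w\<in>Y. \<forall>d\<in>C. subseq d u \<longleftrightarrow> subseq d w}"
    using uv(2) w(1) by auto
qed

lemma ptl_saturated:
  "finite C \<Longrightarrow> C \<subseteq> lists A \<Longrightarrow> S \<subseteq> lists A \<Longrightarrow>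
   (\<forall>u v. u \<in> lists A \<longrightarrow> v \<in> lists A \<longrightarrow> (\<forall>c\<in>C. subseq c u \<longleftrightarrow> subseq c v) \<longrightarrow> u \<in> S \<longrightarrow> v \<in> S)
   \<Longrightarrow> S \<in> ptl A"
proof (induct C arbitrary: S rule: finite_induct)
  case empty
  show ?case
  proof (cases "S = {}")
    case True thus ?thesis by (simp add: ptl_empty)
  next
    case False
    then obtain u where u: "u \<in> S" by auto
    have "v \<in> S" if "v \<in> lists A" for v
      using empty.prems(3)[rule_format, of u v] u empty.prems(2) that by auto
    hence "S = lists A" using empty.prems(2) by auto
    thus ?thesis by (simp add: ptl_lists)
  qed
next
  case (insert c C)
  define G where "G = {u \<in> lists A. subseq c u}"
  define S1 where "S1 = {u \<in> lists A. \<exists>v\<in>S \<inter> G. \<forall>d\<in>C. subseq d u \<longleftrightarrow> subseq d v}"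
  define S2 where "S2 = {u \<in> lists A. \<exists>v\<in>S - G. \<forall>d\<in>C. subseq d u \<longleftrightarrow> subseq d v}"
  have CA: "C \<subseteq> lists A" using insert.prems(1) by auto
  have G: "G \<in> ptl A" unfolding G_def using insert.prems(1) by (intro ptl_gen') auto
  have S1: "S1 \<in> ptl A" unfolding S1_def
    by (rule insert.hyps(3)[OF CA _ sat_closure]) auto
  have S2: "S2 \<in> ptl A" unfolding S2_def
    by (rule insert.hyps(3)[OF CA _ sat_closure]) auto
  have "S = (S1 \<inter> G) \<union> (S2 \<inter> (lists A - G))"
  proof
    show "S \<subseteq> (S1 \<inter> G) \<union> (S2 \<inter> (lists A - G))"
    proof
      fix u assume u: "u \<in> S"
      have ul: "u \<in> lists A" using u insert.prems(2) by auto
      show "u \<in> (S1 \<inter> G) \<union> (S2 \<inter> (lists A - G))"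
      proof (cases "u \<in> G")
        case True
        hence "u \<in> S1" unfolding S1_def using u ul by auto
        thus ?thesis using True by auto
      next
        case False
        hence "u \<in> S2" unfolding S2_def using u ul by auto
        thus ?thesis using False ul by auto
      qed
    qed
    show "(S1 \<inter> G) \<union> (S2 \<inter> (lists A - G)) \<subseteq> S"
    proof
      fix u assume u: "u \<in> (S1 \<inter> G) \<union> (S2 \<inter> (lists A - G))"
      obtain v where v: "u \<in> lists A" "v \<in> S" "\<forall>d\<in>C. subseq d u \<longleftrightarrow> subseq d v"
        "subseq c u \<longleftrightarrow> subseq c v"
      proof (cases "u \<in> G")
        case True
        with u have "u \<in> S1" by auto
        then obtain v where "u \<in> lists A" "v \<in> S \<inter> G" "\<forall>d\<in>C. subseq d u \<longleftrightarrow> subseq d v"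
          unfolding S1_def by auto
        thus ?thesis using that True unfolding G_def by auto
      next
        case False
        with u have "u \<in> S2" by auto
        then obtain v where "u \<in> lists A" "v \<in> S - G" "\<forall>d\<in>C. subseq d u \<longleftrightarrow> subseq d v"
          unfolding S2_def by auto
        moreover have "v \<in> lists A" using \<open>v \<in> S - G\<close> insert.prems(2) by auto
        ultimately show ?thesis using that False unfolding G_def by auto
      qed
      have vl: "v \<in> lists A" using v(2) insert.prems(2) by auto
      have "\<forall>d\<in>insert c C. subseq d v \<longleftrightarrow> subseq d u" using v(3,4) by auto
      thus "u \<in> S" using insert.prems(3)[rule_format, of v u] vl v(1,2) by auto
    qed
  qed
  thus ?case using G S1 S2 by (metis ptl.union ptl.inter ptl.compl)
qed

lemma ptl_invariant:
  "S \<in> ptl A \<Longrightarrow> \<exists>m. \<forall>u v. u \<in> lists A \<longrightarrow> v \<in> lists A \<longrightarrow> subseq u v \<longrightarrow>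
     (\<forall>w. length w \<le> m \<longrightarrow> subseq w v \<longrightarrow> subseq w u) \<longrightarrow> (u \<in> S \<longleftrightarrow> v \<in> S)"
proof (induct rule: ptl.induct)
  case (gen cs)
  show ?case
  proof (rule exI[of _ "length cs"], intro allI impI)
    fix u v assume a: "u \<in> lists A" "v \<in> lists A" "subseq u v"
      and b: "\<forall>w. length w \<le> length cs \<longrightarrow> subseq w v \<longrightarrow> subseq w u"
    have "subseq cs u \<longleftrightarrow> subseq cs v"
    proof
      assume "subseq cs u" thus "subseq cs v" using a(3) by (rule subseq_order.order_trans)
    next
      assume "subseq cs v" thus "subseq cs u" using b by blast
    qed
    thus "u \<in> {u \<in> lists A. subseq cs u} \<longleftrightarrow> v \<in> {u \<in> lists A. subseq cs u}"
      using a by blast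
  qed
next
  case (compl S) thus ?case by blast
next
  case (union S R)
  then obtain m1 m2 where
    m1: "\<forall>u v. u \<in> lists A \<longrightarrow> v \<in> lists A \<longrightarrow> subseq u v \<longrightarrow>
     (\<forall>w. length w \<le> m1 \<longrightarrow> subseq w v \<longrightarrow> subseq w u) \<longrightarrow> (u \<in> S \<longleftrightarrow> v \<in> S)" and
    m2: "\<forall>u v. u \<in> lists A \<longrightarrow> v \<in> lists A \<longrightarrow> subseq u v \<longrightarrow>
     (\<forall>w. length w \<le> m2 \<longrightarrow> subseq w v \<longrightarrow> subseq w u) \<longrightarrow> (u \<in> R \<longleftrightarrow> v \<in> R)" by blast
  show ?case
  proof (rule exI[of _ "max m1 m2"], intro allI impI)
    fix u v assume a: "u \<in> lists A" "v \<in> lists A" "subseq u v"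
      and b: "\<forall>w. length w \<le> max m1 m2 \<longrightarrow> subseq w v \<longrightarrow> subseq w u"
    have b1: "\<forall>w. length w \<le> m1 \<longrightarrow> subseq w v \<longrightarrow> subseq w u" using b by auto
    have b2: "\<forall>w. length w \<le> m2 \<longrightarrow> subseq w v \<longrightarrow> subseq w u" using b by auto
    have "u \<in> S \<longleftrightarrow> v \<in> S" using m1 a b1 by blast
    moreover have "u \<in> R \<longleftrightarrow> v \<in> R" using m2 a b2 by blast
    ultimately show "u \<in> S \<union> R \<longleftrightarrow> v \<in> S \<union> R" by blast
  qed
next
  case (inter S R)
  then obtain m1 m2 where
    m1: "\<forall>u v. u \<in> lists A \<longrightarrow> v \<in> lists A \<longrightarrow> subseq u v \<longrightarrow>
     (\<forall>w. length w \<le> m1 \<longrightarrow> subseq w v \<longrightarrow> subseq w u) \<longrightarrow> (u \<in> S \<longleftrightarrow> v \<in> S)" and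
    m2: "\<forall>u v. u \<in> lists A \<longrightarrow> v \<in> lists A \<longrightarrow> subseq u v \<longrightarrow>
     (\<forall>w. length w \<le> m2 \<longrightarrow> subseq w v \<longrightarrow> subseq w u) \<longrightarrow> (u \<in> R \<longleftrightarrow> v \<in> R)" by blast
  show ?case
  proof (rule exI[of _ "max m1 m2"], intro allI impI)
    fix u v assume a: "u \<in> lists A" "v \<in> lists A" "subseq u v"
      and b: "\<forall>w. length w \<le> max m1 m2 \<longrightarrow> subseq w v \<longrightarrow> subseq w u"
    have b1: "\<forall>w. length w \<le> m1 \<longrightarrow> subseq w v \<longrightarrow> subseq w u" using b by auto
    have b2: "\<forall>w. length w \<le> m2 \<longrightarrow> subseq w v \<longrightarrow> subseq w u" using b by auto
    have "u \<in> S \<longleftrightarrow> v \<in> S" using m1 a b1 by blast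
    moreover have "u \<in> R \<longleftrightarrow> v \<in> R" using m2 a b2 by blast
    ultimately show "u \<in> S \<inter> R \<longleftrightarrow> v \<in> S \<inter> R" by blast
  qed
qed


theorem mainTheorem9:
  fixes as :: "'a list" and L :: "'a list set"
  assumes "distinct as"
    and "L \<subseteq> blockLang as"
  shows "\<not> ptl_separable (set as) (applyRel (relT as) (down L)) (langK as)
           \<longleftrightarrow> down L = blockLang as"
proof -
  define A where "A = set as"
  have down_sub: "down L \<subseteq> blockLang as"
  proof
    fix x assume "x \<in> down L"
    then obtain v where v: "v \<in> L" "subseq x v" by (auto simp: down_def)
    then obtain ks where ks: "length ks = length as" "v = blocks as ks"
      using assms(2) by (auto simp: blockLang_def)
    then obtain js where "length js = length as" "x = blocks as js"
      using blocks_decomp[OF ks(1)] v(2) by blast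
    thus "x \<in> blockLang as" by (auto simp: blockLang_def)
  qed
  have down_closed: "y \<in> down L" if "x \<in> down L" "subseq y x" for x y
    using that by (auto simp: down_def intro: subseq_order.order_trans)
  have len_bound: "js!i \<le> length (blocks as js)" if "length js = length as" "i < length as" for js i
    using blocks_count[OF assms(1) that] count_le_length by metis
  show ?thesis
  proof
    assume ns: "\<not> ptl_separable (set as) (applyRel (relT as) (down L)) (langK as)"
    show "down L = blockLang as"
    proof (rule ccontr)
      assume "down L \<noteq> blockLang as"
      with down_sub obtain ks where ks: "length ks = length as" "blocks as ks \<notin> down L"
        by (auto simp: blockLang_def)
      define C where "C = (\<lambda>(i,e). replicate e (as!i)) ` (SIGMA i:{..<length as}. {..2*ks!i})"
      define X where "X = applyRel (relT as) (down L)"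
      define S where "S = {u \<in> lists A. \<exists>w\<in>X. \<forall>c\<in>C. subseq c u \<longleftrightarrow> subseq c w}"
      have finC: "finite C" unfolding C_def by auto
      have CA: "C \<subseteq> lists A" unfolding C_def A_def by (auto simp: nth_mem)
      have XA: "X \<subseteq> lists A" unfolding X_def applyRel_def relT_def A_def using blocks_set by fastforce
      have SA: "S \<subseteq> lists A" by (auto simp: S_def)
      have Sptl: "S \<in> ptl A"
      proof (rule ptl_saturated[OF finC CA SA], intro allI impI)
        fix u v assume uv: "u \<in> lists A" "v \<in> lists A"
          and pr: "\<forall>c\<in>C. subseq c u \<longleftrightarrow> subseq c v" and uS: "u \<in> S"
        from uS obtain w where w: "w \<in> X" "\<forall>c\<in>C. subseq c u \<longleftrightarrow> subseq c w"
          unfolding S_def by blast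
        have "\<forall>c\<in>C. subseq c v \<longleftrightarrow> subseq c w" using w(2) pr by blast
        thus "v \<in> S" unfolding S_def using uv(2) w(1) by blast
      qed
      have XS: "X \<subseteq> S" using XA unfolding S_def by blast
      have disj: "S \<inter> langK as = {}"
      proof (rule ccontr)
        assume "S \<inter> langK as \<noteq> {}"
        then obtain u where uS: "u \<in> S" and uK: "u \<in> langK as" by blast
        from uK obtain ls where ls: "length ls = length as" "u = blocks as (map (\<lambda>k. 2*k+1) ls)"
          by (auto simp: langK_def)
        from uS obtain w where wX: "w \<in> X" and prof: "\<forall>c\<in>C. subseq c u \<longleftrightarrow> subseq c w"
          by (auto simp: S_def)
        from wX obtain js where js: "length js = length as" "blocks as js \<in> down L"
            "w = blocks as (map (\<lambda>k. 2*k) js)"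
          by (auto simp: X_def applyRel_def relT_def)
        have "\<not> (\<forall>i<length as. ks!i \<le> js!i)"
        proof
          assume "\<forall>i<length as. ks!i \<le> js!i"
          hence "subseq (blocks as ks) (blocks as js)" using blocks_mono ks(1) js(1) by blast
          thus False using down_closed js(2) ks(2) by blast
        qed
        then obtain i where i: "i < length as" "js!i < ks!i" by (auto simp: not_le)
        define x where "x = 2 * js!i"
        define y where "y = 2 * ls!i + 1"
        have cw: "count_list w (as!i) = x"
          using blocks_count[OF assms(1), of "map (\<lambda>k. 2*k) js" i] js i by (simp add: x_def)
        have cu: "count_list u (as!i) = y"
          using blocks_count[OF assms(1), of "map (\<lambda>k. 2*k+1) ls" i] ls i by (simp add: y_def)
        define e where "e = min x y + 1"
        have "e \<le> 2 * ks!i" using i by (simp add: e_def x_def)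
        hence "replicate e (as!i) \<in> C" unfolding C_def using i
          by (auto intro!: image_eqI[of _ _ "(i,e)"])
        hence "subseq (replicate e (as!i)) u \<longleftrightarrow> subseq (replicate e (as!i)) w" using prof by blast
        hence "(e \<le> y) \<longleftrightarrow> (e \<le> x)" by (simp only: rep_subseq_count cw cu)
        moreover have "x \<noteq> y" unfolding x_def y_def by presburger
        ultimately show False by (auto simp: e_def)
      qed
      have "ptl_separable A X (langK as)" unfolding ptl_separable_def using Sptl XS disj by blast
      thus False using ns A_def X_def by simp
    qed
  next
    assume eq: "down L = blockLang as"
    show "\<not> ptl_separable (set as) (applyRel (relT as) (down L)) (langK as)"
    proof
      assume "ptl_separable (set as) (applyRel (relT as) (down L)) (langK as)"
      then obtain S where S: "S \<in> ptl (set as)" "applyRel (relT as) (down L) \<subseteq> S"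
          "S \<inter> langK as = {}" by (auto simp: ptl_separable_def)
      obtain m where m: "\<forall>u v. u \<in> lists (set as) \<longrightarrow> v \<in> lists (set as) \<longrightarrow> subseq u v \<longrightarrow>
         (\<forall>w. length w \<le> m \<longrightarrow> subseq w v \<longrightarrow> subseq w u) \<longrightarrow> (u \<in> S \<longleftrightarrow> v \<in> S)"
        using ptl_invariant[OF S(1)] by blast
      define u where "u = blocks as (replicate (length as) (2*m))"
      define v where "v = blocks as (replicate (length as) (2*m+1))"
      have "blocks as (replicate (length as) m) \<in> down L" using eq by (auto simp: blockLang_def)
      moreover have "(blocks as (replicate (length as) m), u) \<in> relT as"
        unfolding relT_def u_def
        by (rule CollectI, rule exI[of _ "replicate (length as) m"]) simp
      ultimately have uT: "u \<in> applyRel (relT as) (down L)" unfolding applyRel_def by blast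
      have vK: "v \<in> langK as" unfolding langK_def v_def
        by (rule CollectI, rule exI[of _ "replicate (length as) m"]) simp
      have uv: "subseq u v" unfolding u_def v_def by (rule blocks_mono) auto
      have small: "\<forall>w. length w \<le> m \<longrightarrow> subseq w v \<longrightarrow> subseq w u"
      proof (intro allI impI)
        fix w assume w: "length w \<le> m" "subseq w v"
        then obtain js where js: "length js = length as" "w = blocks as js"
          using blocks_decomp[of "replicate (length as) (2*m+1)" as w] v_def by auto
        have "\<forall>i<length as. js!i \<le> replicate (length as) (2*m) ! i"
          using len_bound[OF js(1)] js(2) w(1) by fastforce
        thus "subseq w u" unfolding u_def js(2) using js(1) by (intro blocks_mono) auto
      qed
      have ul: "u \<in> lists (set as)" unfolding u_def by (rule blocks_lists)
      have vl: "v \<in> lists (set as)" unfolding v_def by (rule blocks_lists)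
      have "u \<in> S \<longleftrightarrow> v \<in> S" using m ul vl uv small by blast
      then show False using uT vK S by blast
    qed
  qed
qed

end
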